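(* Let $\Sigma^n\subset\mathbb{R}^{n+1}$ be a hyperplane through the origin and let $P\subset\Sigma$ be an $(n-1)$-dimensional linear subspace of $\Sigma$. Then each of the two open half-hyperplanes of $\Sigma\setminus P$ is stable.
   Context: Stability operator on a self-shrinker $\Sigma$: $Lf=\Delta f-\tfrac12\langle\vec x,\nabla f\rangle+(|A|^2+\tfrac12)f$. A Jacobi function is a function $u$ with $Lu=0$. A region $\Omega\subset\Sigma$ is stable if there exists a Jacobi function on $\Omega$ that is strictly positive on $\Omega$. *)

theory Defs
  imports "HOL-Analysis.Analysis"
begin

definition is_onb :: "'a::euclidean_space set \<Rightarrow> 'a set \<Rightarrow> bool" where
  "is_onb S B \<longleftrightarrow> B \<subseteq> S \<and> pairwise orthogonal B \<and> (\<forall>b\<in>B. norm b = 1) \<and> span B = S"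

definition onb_of :: "'a::euclidean_space set \<Rightarrow> 'a set" where
  "onb_of S = (SOME B. is_onb S B)"

text \<open>Stability operator on a hyperplane through the origin (a flat self-shrinker),
  L u = Delta u - 1/2 <x, grad u> + (|A|^2 + 1/2) u, where |A|^2 = 0 since the
  second fundamental form of a hyperplane vanishes. Here grad u x is the
  intrinsic gradient (tangent to Sigma) and Hess x the derivative of the gradient;
  the Laplacian is the trace of the Hessian over an orthonormal basis of Sigma.\<close>
definition hyperplane_L ::
  "'a::euclidean_space set \<Rightarrow> ('a \<Rightarrow> real) \<Rightarrow> ('a \<Rightarrow> 'a) \<Rightarrow> ('a \<Rightarrow> 'a \<Rightarrow> 'a) \<Rightarrow> 'a \<Rightarrow> real" where
  "hyperplane_L \<Sigma> u grad Hess x =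
     (\<Sum>b\<in>onb_of \<Sigma>. Hess x b \<bullet> b) - 1/2 * (x \<bullet> grad x) + (0 + 1/2) * u x"

definition jacobi_on :: "'a::euclidean_space set \<Rightarrow> 'a set \<Rightarrow> ('a \<Rightarrow> real) \<Rightarrow> bool" where
  "jacobi_on \<Sigma> \<Omega> u \<longleftrightarrow>
     (\<exists>grad Hess.
        (\<forall>x\<in>\<Omega>. (u has_derivative (\<lambda>h. grad x \<bullet> h)) (at x within \<Sigma>)
               \<and> grad x \<in> \<Sigma>
               \<and> (grad has_derivative Hess x) (at x within \<Sigma>))
      \<and> (\<forall>e. continuous_on \<Omega> (\<lambda>x. Hess x e))
      \<and> (\<forall>x\<in>\<Omega>. hyperplane_L \<Sigma> u grad Hess x = 0))"

definition stable_region :: "'a::euclidean_space set \<Rightarrow> 'a set \<Rightarrow> bool" where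
  "stable_region \<Sigma> \<Omega> \<longleftrightarrow> (\<exists>u. jacobi_on \<Sigma> \<Omega> u \<and> (\<forall>x\<in>\<Omega>. u x > 0))"

end

theory Submission
  imports Defs
begin

lemma linear_jacobi:
  fixes \<Sigma> C :: "'a::euclidean_space set"
  assumes "w \<in> \<Sigma>"
  shows "jacobi_on \<Sigma> C (\<lambda>x. w \<bullet> x)"
  unfolding jacobi_on_def
proof (intro exI[of _ "\<lambda>x. w"] exI[of _ "\<lambda>x h. 0"] conjI ballI allI)
  fix x assume "x \<in> C"
  show "((\<lambda>x. w \<bullet> x) has_derivative (\<lambda>h. w \<bullet> h)) (at x within \<Sigma>)"
    by (intro derivative_eq_intros) auto
  show "w \<in> \<Sigma>" by fact
  show "((\<lambda>x. w) has_derivative (\<lambda>h. 0)) (at x within \<Sigma>)"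
    by (rule has_derivative_const)
  show "hyperplane_L \<Sigma> (\<lambda>x. w \<bullet> x) (\<lambda>x. w) (\<lambda>x h. 0) x = 0"
    unfolding hyperplane_L_def by (simp add: inner_commute)
next
  fix e show "continuous_on C (\<lambda>x. (\<lambda>x h. 0::'a) x e)" by simp
qed

theorem proposition4p1:
  fixes \<Sigma> P C :: "'a::euclidean_space set"
  assumes "DIM('a) \<ge> 2"
    and "subspace \<Sigma>" and "dim \<Sigma> = DIM('a) - 1"
    and "subspace P" and "P \<subseteq> \<Sigma>" and "dim P = dim \<Sigma> - 1"
    and "C \<in> components (\<Sigma> - P)"
  shows "stable_region \<Sigma> C"
proof -
  have dl: "dim P < dim \<Sigma>" using assms(1,3,6) by simp
  have "span P \<subset> span \<Sigma>"
    using assms dl by (metis span_eq_iff psubsetI span_mono order_less_irrefl)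
  then obtain v where v: "v \<noteq> 0" "v \<in> span \<Sigma>" "\<And>y. y \<in> span P \<Longrightarrow> orthogonal v y"
    using orthogonal_to_subspace_exists_gen by metis
  have vS: "v \<in> \<Sigma>" using v(2) span_eq_iff[THEN iffD2, OF assms(2)] by simp
  define Q where "Q = \<Sigma> \<inter> {x. v \<bullet> x = 0}"
  have sQ: "subspace Q" unfolding Q_def
    by (intro subspace_inter assms(2) subspace_hyperplane)
  have PQ: "P \<subseteq> Q" unfolding Q_def using v(3) assms(5) span_base
    by (auto simp: orthogonal_def)
  have "span Q \<subset> span \<Sigma>"
  proof -
    have "v \<notin> Q" unfolding Q_def using v(1) by simp
    hence "Q \<subset> \<Sigma>" using vS unfolding Q_def by blast
    thus ?thesis by (subst span_eq_iff[THEN iffD2, OF sQ], subst span_eq_iff[THEN iffD2, OF assms(2)])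
  qed
  hence "dim Q < dim \<Sigma>" by (rule dim_psubset)
  hence "dim Q \<le> dim P" using assms(6) by simp
  hence QP: "Q = P" using subspace_dim_equal[OF assms(4) sQ PQ] by metis
  have nz: "\<And>x. x \<in> C \<Longrightarrow> v \<bullet> x \<noteq> 0"
  proof -
    fix x assume "x \<in> C"
    hence "x \<in> \<Sigma> - P" using in_components_subset[OF assms(7)] by auto
    thus "v \<bullet> x \<noteq> 0" using QP unfolding Q_def by auto
  qed
  have con: "connected C" using in_components_connected[OF assms(7)] .
  obtain x0 where x0: "x0 \<in> C" using in_components_nonempty[OF assms(7)] by auto
  show ?thesis
  proof (cases "v \<bullet> x0 > 0")
    case True
    have "\<forall>x\<in>C. v \<bullet> x > 0"
    proof (rule ccontr)
      assume "\<not> ?thesis" then obtain y where y: "y \<in> C" "v \<bullet> y \<le> 0" by auto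
      from connected_ivt_hyperplane[OF con y(1) x0 y(2)] True nz show False by auto
    qed
    thus ?thesis unfolding stable_region_def using linear_jacobi[OF vS] by blast
  next
    case False
    hence neg: "v \<bullet> x0 < 0" using nz[OF x0] by auto
    have "\<forall>x\<in>C. v \<bullet> x < 0"
    proof (rule ccontr)
      assume "\<not> ?thesis" then obtain y where y: "y \<in> C" "v \<bullet> y \<ge> 0" by auto
      from connected_ivt_hyperplane[OF con x0 y(1) _ y(2)] neg nz show False by auto
    qed
    moreover have "- v \<in> \<Sigma>" using vS assms(2) by (simp add: subspace_neg)
    ultimately show ?thesis unfolding stable_region_def using linear_jacobi[of "-v" \<Sigma> C]
      by (intro exI[of _ "\<lambda>x. (-v) \<bullet> x"]) auto
  qed
qed

end
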